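(* Let $M$ be a left $R$-module which is semi-projective and $\pi$-projective, and let $S = \operatorname{End}_R(M)$ with Jacobson radical $\operatorname{Jac}(S)$. Then $S/\operatorname{Jac}(S)$ is von Neumann regular if and only if for each $f \in S$ the submodule $\operatorname{Im}(f)$ has a weak supplement in $M$.
   Context: Endomorphisms are written on the right of their arguments, so for $s,f\in S$ the product $sf$ means first $s$ then $f$, and $\operatorname{Hom}_R(M,N)$ is a left $S$-module for each submodule $N\subseteq M$ (viewed as a subset of $S$). $M$ is semi-projective if $Sf = \operatorname{Hom}_R(M, \operatorname{Im}(f))$ for every $f \in S$. $M$ is $\pi$-projective if for all submodules $N, L$ of $M$ with $M = N + L$ one has $S = \operatorname{Hom}_R(M,N) + \operatorname{Hom}_R(M,L)$. A submodule $N$ of $M$ is small in $M$ if $N + L \neq M$ for every proper submodule $L$ of $M$. A submodule $L$ of $M$ is a weak supplement of a submodule $N$ if $N + L = M$ and $N \cap L$ is small in $M$. *)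

theory Defs
  imports "HOL-Algebra.Module" "HOL-Algebra.QuotRing"
begin

text \<open>Left modules over an arbitrary (not necessarily commutative) ring R.
  The library locale module requires a commutative ring, so we state the
  same axioms over a ring.\<close>

locale left_module = R?: ring R + M?: abelian_group M
  for R :: "('a, 'c) ring_scheme" and M :: "('a, 'b, 'd) module_scheme" (structure) +
  assumes smult_closed:
      "\<lbrakk>a \<in> carrier R; x \<in> carrier M\<rbrakk> \<Longrightarrow> a \<odot>\<^bsub>M\<^esub> x \<in> carrier M"
    and smult_l_distr:
      "\<lbrakk>a \<in> carrier R; b \<in> carrier R; x \<in> carrier M\<rbrakk> \<Longrightarrow>
      (a \<oplus>\<^bsub>R\<^esub> b) \<odot>\<^bsub>M\<^esub> x = a \<odot>\<^bsub>M\<^esub> x \<oplus>\<^bsub>M\<^esub> b \<odot>\<^bsub>M\<^esub> x"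
    and smult_r_distr:
      "\<lbrakk>a \<in> carrier R; x \<in> carrier M; y \<in> carrier M\<rbrakk> \<Longrightarrow>
      a \<odot>\<^bsub>M\<^esub> (x \<oplus>\<^bsub>M\<^esub> y) = a \<odot>\<^bsub>M\<^esub> x \<oplus>\<^bsub>M\<^esub> a \<odot>\<^bsub>M\<^esub> y"
    and smult_assoc1:
      "\<lbrakk>a \<in> carrier R; b \<in> carrier R; x \<in> carrier M\<rbrakk> \<Longrightarrow>
      (a \<otimes>\<^bsub>R\<^esub> b) \<odot>\<^bsub>M\<^esub> x = a \<odot>\<^bsub>M\<^esub> (b \<odot>\<^bsub>M\<^esub> x)"
    and smult_one:
      "x \<in> carrier M \<Longrightarrow> \<one>\<^bsub>R\<^esub> \<odot>\<^bsub>M\<^esub> x = x"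

definition End_carrier :: "('a, 'c) ring_scheme \<Rightarrow> ('a, 'b, 'd) module_scheme \<Rightarrow> ('b \<Rightarrow> 'b) set"
  where "End_carrier R M = {f.
      (\<forall>x\<in>carrier M. f x \<in> carrier M)
    \<and> (\<forall>x\<in>carrier M. \<forall>y\<in>carrier M. f (x \<oplus>\<^bsub>M\<^esub> y) = f x \<oplus>\<^bsub>M\<^esub> f y)
    \<and> (\<forall>a\<in>carrier R. \<forall>x\<in>carrier M. f (a \<odot>\<^bsub>M\<^esub> x) = a \<odot>\<^bsub>M\<^esub> f x)
    \<and> (\<forall>x. x \<notin> carrier M \<longrightarrow> f x = undefined)}"

text \<open>The endomorphism ring S = End_R(M), endomorphisms written on the right:
  the product s f means first s then f.\<close>

definition End_ring :: "('a, 'c) ring_scheme \<Rightarrow> ('a, 'b, 'd) module_scheme \<Rightarrow> ('b \<Rightarrow> 'b) ring"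
  where "End_ring R M =
    \<lparr>carrier = End_carrier R M,
     mult = (\<lambda>s f. \<lambda>x\<in>carrier M. f (s x)),
     one = (\<lambda>x\<in>carrier M. x),
     zero = (\<lambda>x\<in>carrier M. \<zero>\<^bsub>M\<^esub>),
     add = (\<lambda>f g. \<lambda>x\<in>carrier M. f x \<oplus>\<^bsub>M\<^esub> g x)\<rparr>"

definition left_ideal :: "'s set \<Rightarrow> ('s, 'e) ring_scheme \<Rightarrow> bool"
  where "left_ideal I S \<longleftrightarrow> additive_subgroup I S \<and>
      (\<forall>a\<in>I. \<forall>x\<in>carrier S. x \<otimes>\<^bsub>S\<^esub> a \<in> I)"

definition maximal_left_ideal :: "'s set \<Rightarrow> ('s, 'e) ring_scheme \<Rightarrow> bool"
  where "maximal_left_ideal I S \<longleftrightarrow> left_ideal I S \<and> I \<noteq> carrier S \<and>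
      (\<forall>J. left_ideal J S \<and> I \<subseteq> J \<longrightarrow> J = I \<or> J = carrier S)"

definition jacobson_radical :: "('s, 'e) ring_scheme \<Rightarrow> 's set"
  where "jacobson_radical S = carrier S \<inter> \<Inter>{I. maximal_left_ideal I S}"

definition von_neumann_regular :: "('s, 'e) ring_scheme \<Rightarrow> bool"
  where "von_neumann_regular S \<longleftrightarrow>
      (\<forall>a\<in>carrier S. \<exists>b\<in>carrier S. a \<otimes>\<^bsub>S\<^esub> b \<otimes>\<^bsub>S\<^esub> a = a)"

definition Hom_into :: "('a, 'c) ring_scheme \<Rightarrow> ('a, 'b, 'd) module_scheme \<Rightarrow> 'b set \<Rightarrow> ('b \<Rightarrow> 'b) set"
  where "Hom_into R M N = {f \<in> End_carrier R M. f ` carrier M \<subseteq> N}"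

definition sum_sub :: "('a, 'b, 'd) module_scheme \<Rightarrow> 'b set \<Rightarrow> 'b set \<Rightarrow> 'b set"
  where "sum_sub M N L = {x \<oplus>\<^bsub>M\<^esub> y | x y. x \<in> N \<and> y \<in> L}"

definition semi_projective :: "('a, 'c) ring_scheme \<Rightarrow> ('a, 'b, 'd) module_scheme \<Rightarrow> bool"
  where "semi_projective R M \<longleftrightarrow>
      (\<forall>f\<in>End_carrier R M.
         {s \<otimes>\<^bsub>End_ring R M\<^esub> f | s. s \<in> End_carrier R M} = Hom_into R M (f ` carrier M))"

definition pi_projective :: "('a, 'c) ring_scheme \<Rightarrow> ('a, 'b, 'd) module_scheme \<Rightarrow> bool"
  where "pi_projective R M \<longleftrightarrow>
      (\<forall>N L. submodule N R M \<and> submodule L R M \<and> sum_sub M N L = carrier M \<longrightarrow>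
         End_carrier R M = {g \<oplus>\<^bsub>End_ring R M\<^esub> h | g h. g \<in> Hom_into R M N \<and> h \<in> Hom_into R M L})"

definition small_in :: "('a, 'c) ring_scheme \<Rightarrow> ('a, 'b, 'd) module_scheme \<Rightarrow> 'b set \<Rightarrow> bool"
  where "small_in R M N \<longleftrightarrow> submodule N R M \<and>
      (\<forall>L. submodule L R M \<and> L \<noteq> carrier M \<longrightarrow> sum_sub M N L \<noteq> carrier M)"

definition weak_supplement :: "('a, 'c) ring_scheme \<Rightarrow> ('a, 'b, 'd) module_scheme \<Rightarrow> 'b set \<Rightarrow> 'b set \<Rightarrow> bool"
  where "weak_supplement R M L N \<longleftrightarrow> submodule L R M \<and>
      sum_sub M N L = carrier M \<and> small_in R M (N \<inter> L)"

end

theory Submission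
  imports Defs
begin



context left_module
begin

abbreviation "E \<equiv> End_carrier R M"
abbreviation "S \<equiv> End_ring R M"

lemma S_carrier[simp]: "carrier S = E" by (simp add: End_ring_def)
lemma S_mult: "a \<otimes>\<^bsub>S\<^esub> b = (\<lambda>x\<in>carrier M. b (a x))" by (simp add: End_ring_def)
lemma S_add: "a \<oplus>\<^bsub>S\<^esub> b = (\<lambda>x\<in>carrier M. a x \<oplus> b x)" by (simp add: End_ring_def)
lemma S_one: "\<one>\<^bsub>S\<^esub> = (\<lambda>x\<in>carrier M. x)" by (simp add: End_ring_def)
lemma S_zero: "\<zero>\<^bsub>S\<^esub> = (\<lambda>x\<in>carrier M. \<zero>)" by (simp add: End_ring_def)

lemma EndD:
  assumes "f \<in> E"
  shows "\<And>x. x \<in> carrier M \<Longrightarrow> f x \<in> carrier M"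
    and "\<And>x y. x \<in> carrier M \<Longrightarrow> y \<in> carrier M \<Longrightarrow> f (x \<oplus> y) = f x \<oplus> f y"
    and "\<And>a x. a \<in> carrier R \<Longrightarrow> x \<in> carrier M \<Longrightarrow> f (a \<odot>\<^bsub>M\<^esub> x) = a \<odot>\<^bsub>M\<^esub> f x"
    and "\<And>x. x \<notin> carrier M \<Longrightarrow> f x = undefined"
  using assms by (auto simp: End_carrier_def)

lemma EndI:
  assumes "\<And>x. x \<in> carrier M \<Longrightarrow> f x \<in> carrier M"
    and "\<And>x y. x \<in> carrier M \<Longrightarrow> y \<in> carrier M \<Longrightarrow> f (x \<oplus> y) = f x \<oplus> f y"
    and "\<And>a x. a \<in> carrier R \<Longrightarrow> x \<in> carrier M \<Longrightarrow> f (a \<odot>\<^bsub>M\<^esub> x) = a \<odot>\<^bsub>M\<^esub> f x"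
    and "\<And>x. x \<notin> carrier M \<Longrightarrow> f x = undefined"
  shows "f \<in> E"
  using assms by (auto simp: End_carrier_def)

lemma End_eqI:
  assumes "f \<in> E" "g \<in> E" "\<And>x. x \<in> carrier M \<Longrightarrow> f x = g x"
  shows "f = g"
proof
  fix x show "f x = g x"
    using assms EndD(4)[OF assms(1)] EndD(4)[OF assms(2)] by (cases "x \<in> carrier M") auto
qed

lemma End_zero:
  assumes "f \<in> E" shows "f \<zero> = \<zero>"
proof -
  have "f \<zero> \<oplus> f \<zero> = f \<zero>"
    using EndD(2)[OF assms, of \<zero> \<zero>] EndD(1)[OF assms, of \<zero>] by simp
  then show ?thesis using EndD(1)[OF assms, of \<zero>] M.add.l_cancel_one by (metis M.zero_closed)
qed

lemma End_neg:
  assumes "f \<in> E" "x \<in> carrier M" shows "f (\<ominus> x) = \<ominus> f x"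
proof -
  have "f (\<ominus> x) \<oplus> f x = \<zero>"
    using EndD(2)[OF assms(1), of "\<ominus> x" x] assms End_zero[OF assms(1)] by (simp add: M.l_neg)
  then show ?thesis using M.minus_equality EndD(1)[OF assms(1)] assms by auto
qed

lemma End_minus:
  assumes "f \<in> E" "x \<in> carrier M" "y \<in> carrier M" shows "f (x \<ominus> y) = f x \<ominus> f y"
  using assms by (simp add: M.minus_eq EndD End_neg)

lemma mult_closed: "a \<in> E \<Longrightarrow> b \<in> E \<Longrightarrow> (\<lambda>x\<in>carrier M. b (a x)) \<in> E"
  by (rule EndI) (auto simp: EndD smult_closed)

lemma add_closed: "a \<in> E \<Longrightarrow> b \<in> E \<Longrightarrow> (\<lambda>x\<in>carrier M. a x \<oplus> b x) \<in> E"
  by (rule EndI) (auto simp: EndD M.a_ac smult_r_distr smult_closed)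

lemma one_closed: "(\<lambda>x\<in>carrier M. x) \<in> E"
  by (rule EndI) (auto simp: smult_closed)

lemma zero_closed: "(\<lambda>x\<in>carrier M. \<zero>) \<in> E"
proof (rule EndI)
  fix a x assume "a \<in> carrier R" "x \<in> carrier M"
  have "a \<odot>\<^bsub>M\<^esub> \<zero> \<oplus> a \<odot>\<^bsub>M\<^esub> \<zero> = a \<odot>\<^bsub>M\<^esub> \<zero> \<oplus> \<zero>"
    using smult_r_distr[of a \<zero> \<zero>] \<open>a \<in> carrier R\<close> smult_closed by simp
  then have "a \<odot>\<^bsub>M\<^esub> \<zero> = \<zero>" using smult_closed \<open>a \<in> carrier R\<close>
    by (metis M.add.l_cancel_one M.zero_closed M.r_zero)
  then show "(\<lambda>x\<in>carrier M. \<zero>) (a \<odot>\<^bsub>M\<^esub> x) = a \<odot>\<^bsub>M\<^esub> (\<lambda>x\<in>carrier M. \<zero>) x"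
    using \<open>x \<in> carrier M\<close> \<open>a \<in> carrier R\<close> smult_closed by simp
qed auto

lemma neg_closed: "a \<in> E \<Longrightarrow> (\<lambda>x\<in>carrier M. \<ominus> a x) \<in> E"
proof (rule EndI)
  fix b x assume a: "a \<in> E" and "b \<in> carrier R" "x \<in> carrier M"
  have "b \<odot>\<^bsub>M\<^esub> (\<ominus> a x) \<oplus> b \<odot>\<^bsub>M\<^esub> a x = b \<odot>\<^bsub>M\<^esub> \<zero>"
    using smult_r_distr[of b "\<ominus> a x" "a x"] \<open>b \<in> carrier R\<close> \<open>x \<in> carrier M\<close> EndD(1)[OF a] by (simp add: M.l_neg)
  also have "\<dots> = \<zero>"
    using zero_closed[THEN EndD(3)] \<open>b \<in> carrier R\<close> by (metis M.zero_closed restrict_apply' smult_closed)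
  finally have "\<ominus> (b \<odot>\<^bsub>M\<^esub> a x) = b \<odot>\<^bsub>M\<^esub> (\<ominus> a x)"
    using M.minus_equality \<open>b \<in> carrier R\<close> \<open>x \<in> carrier M\<close> EndD(1)[OF a] smult_closed by auto
  then show "(\<lambda>x\<in>carrier M. \<ominus> a x) (b \<odot>\<^bsub>M\<^esub> x) = b \<odot>\<^bsub>M\<^esub> (\<lambda>x\<in>carrier M. \<ominus> a x) x"
    using \<open>x \<in> carrier M\<close> \<open>b \<in> carrier R\<close> smult_closed EndD[OF a] by simp
qed (auto simp: EndD M.minus_add smult_closed)

lemma S_mult_closed: "a \<in> E \<Longrightarrow> b \<in> E \<Longrightarrow> a \<otimes>\<^bsub>S\<^esub> b \<in> E"
  by (simp add: S_mult mult_closed)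
lemma S_add_closed: "a \<in> E \<Longrightarrow> b \<in> E \<Longrightarrow> a \<oplus>\<^bsub>S\<^esub> b \<in> E"
  by (simp add: S_add add_closed)
lemma S_one_closed: "\<one>\<^bsub>S\<^esub> \<in> E" by (simp add: S_one one_closed)
lemma S_zero_closed: "\<zero>\<^bsub>S\<^esub> \<in> E" by (simp add: S_zero zero_closed)
lemma S_mult_app[simp]: "x \<in> carrier M \<Longrightarrow> (a \<otimes>\<^bsub>S\<^esub> b) x = b (a x)" by (simp add: S_mult)
lemma S_add_app[simp]: "x \<in> carrier M \<Longrightarrow> (a \<oplus>\<^bsub>S\<^esub> b) x = a x \<oplus> b x" by (simp add: S_add)
lemma S_one_app[simp]: "x \<in> carrier M \<Longrightarrow> \<one>\<^bsub>S\<^esub> x = x" by (simp add: S_one)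
lemma S_zero_app[simp]: "x \<in> carrier M \<Longrightarrow> \<zero>\<^bsub>S\<^esub> x = \<zero>" by (simp add: S_zero)

lemma S_ring: "ring S"
proof (rule ringI)
  show "abelian_group S"
  proof (rule abelian_groupI)
    fix x y z assume xyz: "x \<in> carrier S" "y \<in> carrier S" "z \<in> carrier S"
    show "x \<oplus>\<^bsub>S\<^esub> y \<in> carrier S" using xyz by (simp add: S_add add_closed)
    show "x \<oplus>\<^bsub>S\<^esub> y \<oplus>\<^bsub>S\<^esub> z = x \<oplus>\<^bsub>S\<^esub> (y \<oplus>\<^bsub>S\<^esub> z)"
      using xyz by (intro ext) (auto simp: S_add EndD M.a_assoc)
    show "x \<oplus>\<^bsub>S\<^esub> y = y \<oplus>\<^bsub>S\<^esub> x"
      using xyz by (intro ext) (auto simp: S_add EndD M.a_comm)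
    show "\<zero>\<^bsub>S\<^esub> \<oplus>\<^bsub>S\<^esub> x = x"
      using xyz by (intro End_eqI S_add_closed S_zero_closed) (auto simp: EndD)
    show "\<exists>y\<in>carrier S. y \<oplus>\<^bsub>S\<^esub> x = \<zero>\<^bsub>S\<^esub>"
      using xyz by (intro bexI[of _ "\<lambda>v\<in>carrier M. \<ominus> x v"]) 
        (auto simp: S_add S_zero EndD neg_closed M.l_neg intro!: ext)
  qed (simp add: S_zero zero_closed)
  show "monoid S"
  proof (rule monoidI)
    fix x y z assume xyz: "x \<in> carrier S" "y \<in> carrier S" "z \<in> carrier S"
    show "x \<otimes>\<^bsub>S\<^esub> y \<in> carrier S" using xyz by (simp add: S_mult mult_closed)
    show "x \<otimes>\<^bsub>S\<^esub> y \<otimes>\<^bsub>S\<^esub> z = x \<otimes>\<^bsub>S\<^esub> (y \<otimes>\<^bsub>S\<^esub> z)"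
      using xyz by (intro ext) (auto simp: S_mult EndD)
    show "\<one>\<^bsub>S\<^esub> \<otimes>\<^bsub>S\<^esub> x = x"
      using xyz by (intro End_eqI S_mult_closed S_one_closed) (auto simp: EndD)
    show "x \<otimes>\<^bsub>S\<^esub> \<one>\<^bsub>S\<^esub> = x"
      using xyz by (intro End_eqI S_mult_closed S_one_closed) (auto simp: EndD)
  qed (simp add: S_one one_closed)
  fix x y z assume xyz: "x \<in> carrier S" "y \<in> carrier S" "z \<in> carrier S"
  show "(x \<oplus>\<^bsub>S\<^esub> y) \<otimes>\<^bsub>S\<^esub> z = x \<otimes>\<^bsub>S\<^esub> z \<oplus>\<^bsub>S\<^esub> y \<otimes>\<^bsub>S\<^esub> z"
    using xyz by (intro ext) (auto simp: S_mult S_add EndD)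
  show "z \<otimes>\<^bsub>S\<^esub> (x \<oplus>\<^bsub>S\<^esub> y) = z \<otimes>\<^bsub>S\<^esub> x \<oplus>\<^bsub>S\<^esub> z \<otimes>\<^bsub>S\<^esub> y"
    using xyz by (intro ext) (auto simp: S_mult S_add EndD)
qed


end


context left_module begin
lemma S_neg_app[simp]:
  assumes "a \<in> E" "x \<in> carrier M" shows "(\<ominus>\<^bsub>S\<^esub> a) x = \<ominus> a x"
proof -
  interpret SR: ring S by (rule S_ring)
  have "\<ominus>\<^bsub>S\<^esub> a = (\<lambda>v\<in>carrier M. \<ominus> a v)"
    using assms by (intro SR.minus_equality) (auto simp: S_add S_zero EndD neg_closed M.l_neg intro!: ext)
  then show ?thesis using assms by simp
qed

lemma S_neg_closed: "a \<in> E \<Longrightarrow> \<ominus>\<^bsub>S\<^esub> a \<in> E"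
proof -
  interpret SR: ring S by (rule S_ring)
  show "a \<in> E \<Longrightarrow> \<ominus>\<^bsub>S\<^esub> a \<in> E" using SR.a_inv_closed by simp
qed

lemma submoduleI':
  assumes "H \<subseteq> carrier M" "\<zero> \<in> H" "\<And>a. a \<in> H \<Longrightarrow> \<ominus> a \<in> H"
    "\<And>a b. a \<in> H \<Longrightarrow> b \<in> H \<Longrightarrow> a \<oplus> b \<in> H"
    "\<And>a x. a \<in> carrier R \<Longrightarrow> x \<in> H \<Longrightarrow> a \<odot>\<^bsub>M\<^esub> x \<in> H"
  shows "submodule H R M"
proof (intro submodule.intro subgroup.intro submodule_axioms.intro)
  show "H \<subseteq> carrier (add_monoid M)" using assms(1) by simp
  show "\<one>\<^bsub>add_monoid M\<^esub> \<in> H" using assms(2) by simp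
  show "x \<otimes>\<^bsub>add_monoid M\<^esub> y \<in> H" if "x \<in> H" "y \<in> H" for x y using assms(4) that by simp
  show "inv\<^bsub>add_monoid M\<^esub> x \<in> H" if "x \<in> H" for x using assms(3)[OF that] unfolding a_inv_def .
  show "a \<odot>\<^bsub>M\<^esub> x \<in> H" if "a \<in> carrier R" "x \<in> H" for a x using assms(5) that by simp
qed

lemma submoduleD:
  assumes "submodule H R M"
  shows "H \<subseteq> carrier M" "\<zero> \<in> H" "\<And>a. a \<in> H \<Longrightarrow> \<ominus> a \<in> H"
    "\<And>a b. a \<in> H \<Longrightarrow> b \<in> H \<Longrightarrow> a \<oplus> b \<in> H"
    "\<And>a x. a \<in> carrier R \<Longrightarrow> x \<in> H \<Longrightarrow> a \<odot>\<^bsub>M\<^esub> x \<in> H"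
proof -
  interpret H: subgroup H "add_monoid M" using assms submodule.axioms(1) by blast
  show "H \<subseteq> carrier M" using H.subset by simp
  show "\<zero> \<in> H" using H.one_closed by simp
  show "\<And>a. a \<in> H \<Longrightarrow> \<ominus> a \<in> H" unfolding a_inv_def by (rule H.m_inv_closed)
  show "\<And>a b. a \<in> H \<Longrightarrow> b \<in> H \<Longrightarrow> a \<oplus> b \<in> H" using H.m_closed by simp
  show "\<And>a x. a \<in> carrier R \<Longrightarrow> x \<in> H \<Longrightarrow> a \<odot>\<^bsub>M\<^esub> x \<in> H"
    by (rule submodule.smult_closed[OF assms])
qed

lemma carrier_submodule: "submodule (carrier M) R M"
  by (rule submoduleI') (simp_all add: smult_closed)

lemma img_submodule:
  assumes "f \<in> E" "submodule N R M" shows "submodule (f ` N) R M"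
proof (rule submoduleI')
  note N = submoduleD[OF assms(2)]
  show "f ` N \<subseteq> carrier M" using N(1) EndD(1)[OF assms(1)] by auto
  show "\<zero> \<in> f ` N" using N(2) End_zero[OF assms(1)] by force
  show "\<ominus> a \<in> f ` N" if a: "a \<in> f ` N" for a
  proof -
    obtain y where y: "y \<in> N" "a = f y" using a by auto
    then have "\<ominus> a = f (\<ominus> y)" using N(1) End_neg[OF assms(1)] by auto
    then show ?thesis using N(3) y by auto
  qed
  show "a \<oplus> b \<in> f ` N" if ab: "a \<in> f ` N" "b \<in> f ` N" for a b
  proof -
    obtain y z where y: "y \<in> N" "a = f y" "z \<in> N" "b = f z" using ab by auto
    moreover have "y \<in> carrier M" "z \<in> carrier M" using y N(1) by auto
    ultimately have "a \<oplus> b = f (y \<oplus> z)" using EndD(2)[OF assms(1), of y z] by simp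
    then show ?thesis using N(4) y by auto
  qed
  show "r \<odot>\<^bsub>M\<^esub> a \<in> f ` N" if ra: "r \<in> carrier R" "a \<in> f ` N" for r a
  proof -
    obtain y where y: "y \<in> N" "a = f y" using ra by auto
    then have "r \<odot>\<^bsub>M\<^esub> a = f (r \<odot>\<^bsub>M\<^esub> y)" using N(1) EndD(3)[OF assms(1)] ra by auto
    then show ?thesis using N(5) y ra by auto
  qed
qed

lemma Im_submodule: "f \<in> E \<Longrightarrow> submodule (f ` carrier M) R M"
  by (rule img_submodule[OF _ carrier_submodule])

lemma preimg_submodule:
  assumes "f \<in> E" "submodule K R M" shows "submodule {x \<in> carrier M. f x \<in> K} R M"
proof -
  note K = submoduleD[OF assms(2)]
  show ?thesis
  proof (rule submoduleI')
    show "\<zero> \<in> {x \<in> carrier M. f x \<in> K}" using K(2) End_zero[OF assms(1)] by simp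
    show "{x \<in> carrier M. f x \<in> K} \<subseteq> carrier M" by auto
    show "\<ominus> a \<in> {x \<in> carrier M. f x \<in> K}" if a: "a \<in> {x \<in> carrier M. f x \<in> K}" for a
      using a K(3) End_neg[OF assms(1), of a] by simp
    show "a \<oplus> b \<in> {x \<in> carrier M. f x \<in> K}" if a: "a \<in> {x \<in> carrier M. f x \<in> K}"
      and b: "b \<in> {x \<in> carrier M. f x \<in> K}" for a b
      using a b K(4) EndD(2)[OF assms(1), of a b] by simp
    show "r \<odot>\<^bsub>M\<^esub> a \<in> {x \<in> carrier M. f x \<in> K}" if r: "r \<in> carrier R"
      and a: "a \<in> {x \<in> carrier M. f x \<in> K}" for r a
      using a r K(5) EndD(3)[OF assms(1), of r a] smult_closed by simp
  qed
qed

lemma sum_sub_subset: "N \<subseteq> carrier M \<Longrightarrow> L \<subseteq> carrier M \<Longrightarrow> sum_sub M N L \<subseteq> carrier M"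
  by (auto simp: sum_sub_def)

lemma small_mono:
  assumes "small_in R M K" "submodule N R M" "N \<subseteq> K"
  shows "small_in R M N"
  unfolding small_in_def
proof (intro conjI allI impI assms(2))
  fix L assume L: "submodule L R M \<and> L \<noteq> carrier M"
  have K: "submodule K R M" using assms(1) by (simp add: small_in_def)
  have ne: "sum_sub M K L \<noteq> carrier M" using assms(1) L by (simp add: small_in_def)
  show "sum_sub M N L \<noteq> carrier M"
  proof
    assume eq: "sum_sub M N L = carrier M"
    have "sum_sub M N L \<subseteq> sum_sub M K L" using assms(3) by (auto simp: sum_sub_def)
    moreover have "sum_sub M K L \<subseteq> carrier M"
      using submoduleD(1)[OF K] submoduleD(1) L by (intro sum_sub_subset) auto
    ultimately show False using eq ne by auto
  qed
qed

lemma small_img: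
  assumes "small_in R M N" "r \<in> E"
  shows "small_in R M (r ` N)"
  unfolding small_in_def
proof (intro conjI allI impI)
  have N: "submodule N R M" using assms(1) by (simp add: small_in_def)
  note Nd = submoduleD[OF N]
  show "submodule (r ` N) R M" using img_submodule[OF assms(2) N] .
  fix K assume K: "submodule K R M \<and> K \<noteq> carrier M"
  note Kd = submoduleD[of K]
  show "sum_sub M (r ` N) K \<noteq> carrier M"
  proof
    assume eq: "sum_sub M (r ` N) K = carrier M"
    let ?K' = "{x \<in> carrier M. r x \<in> K}"
    have K'sub: "submodule ?K' R M" using preimg_submodule[OF assms(2)] K by blast
    have "sum_sub M N ?K' = carrier M"
    proof
      show "sum_sub M N ?K' \<subseteq> carrier M" using Nd(1) by (intro sum_sub_subset) auto
      show "carrier M \<subseteq> sum_sub M N ?K'"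
      proof
        fix x assume x: "x \<in> carrier M"
        then have "r x \<in> sum_sub M (r ` N) K" using eq EndD(1)[OF assms(2)] by auto
        then obtain n k where nk: "n \<in> N" "k \<in> K" "r x = r n \<oplus> k" by (auto simp: sum_sub_def)
        have n: "n \<in> carrier M" using nk Nd(1) by auto
        have k: "k \<in> carrier M" using nk K submoduleD(1) by blast
        have "r (x \<ominus> n) = k"
          using End_minus[OF assms(2) x n] nk(3) EndD(1)[OF assms(2)] n k
          by (simp add: M.minus_eq M.a_assoc M.a_comm[of k] M.r_neg2)
        moreover have "x = n \<oplus> (x \<ominus> n)" using x n
          by (simp add: M.minus_eq M.a_lcomm[of n x] M.r_neg M.r_zero)
        ultimately show "x \<in> sum_sub M N ?K'" using nk(1,2) x n unfolding sum_sub_def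
          by (intro CollectI exI[of _ n] exI[of _ "x \<ominus> n"]) auto
      qed
    qed
    then have "?K' = carrier M" using assms(1) K'sub unfolding small_in_def by blast
    then have rK: "r ` N \<subseteq> K" using Nd(1) by auto
    have "carrier M \<subseteq> K"
    proof
      fix x assume "x \<in> carrier M"
      then have "x \<in> sum_sub M (r ` N) K" using eq by simp
      then obtain a k where "a \<in> r ` N" "k \<in> K" "x = a \<oplus> k" unfolding sum_sub_def by blast
      then show "x \<in> K" using rK submoduleD(4) K by blast
    qed
    then show False using K submoduleD(1) by blast
  qed
qed

end


context left_module begin

declare S_zero_closed[simp] S_one_closed[simp] S_mult_closed[simp] S_add_closed[simp] S_neg_closed[simp]

lemma left_idealI:
  assumes "I \<subseteq> E" "\<zero>\<^bsub>S\<^esub> \<in> I" "\<And>a. a \<in> I \<Longrightarrow> \<ominus>\<^bsub>S\<^esub> a \<in> I"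
    "\<And>a b. a \<in> I \<Longrightarrow> b \<in> I \<Longrightarrow> a \<oplus>\<^bsub>S\<^esub> b \<in> I"
    "\<And>a x. a \<in> I \<Longrightarrow> x \<in> E \<Longrightarrow> x \<otimes>\<^bsub>S\<^esub> a \<in> I"
  shows "left_ideal I S"
  unfolding left_ideal_def additive_subgroup_def
proof (intro conjI ballI subgroup.intro)
  show "I \<subseteq> carrier (add_monoid S)" using assms(1) by simp
  show "\<one>\<^bsub>add_monoid S\<^esub> \<in> I" using assms(2) by simp
  show "x \<otimes>\<^bsub>add_monoid S\<^esub> y \<in> I" if "x \<in> I" "y \<in> I" for x y using assms(4) that by simp
  show "inv\<^bsub>add_monoid S\<^esub> x \<in> I" if "x \<in> I" for x using assms(3)[OF that] unfolding a_inv_def .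
  show "x \<otimes>\<^bsub>S\<^esub> a \<in> I" if "a \<in> I" "x \<in> carrier S" for a x using assms(5) that by simp
qed

lemma left_idealD:
  assumes "left_ideal I S"
  shows "I \<subseteq> E" "\<zero>\<^bsub>S\<^esub> \<in> I" "\<And>a. a \<in> I \<Longrightarrow> \<ominus>\<^bsub>S\<^esub> a \<in> I"
    "\<And>a b. a \<in> I \<Longrightarrow> b \<in> I \<Longrightarrow> a \<oplus>\<^bsub>S\<^esub> b \<in> I"
    "\<And>a x. a \<in> I \<Longrightarrow> x \<in> E \<Longrightarrow> x \<otimes>\<^bsub>S\<^esub> a \<in> I"
proof -
  interpret H: subgroup I "add_monoid S"
    using assms unfolding left_ideal_def additive_subgroup_def by blast
  show "I \<subseteq> E" using H.subset by simp
  show "\<zero>\<^bsub>S\<^esub> \<in> I" using H.one_closed by simp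
  show "\<And>a. a \<in> I \<Longrightarrow> \<ominus>\<^bsub>S\<^esub> a \<in> I" unfolding a_inv_def by (rule H.m_inv_closed)
  show "\<And>a b. a \<in> I \<Longrightarrow> b \<in> I \<Longrightarrow> a \<oplus>\<^bsub>S\<^esub> b \<in> I" using H.m_closed by simp
  show "\<And>a x. a \<in> I \<Longrightarrow> x \<in> E \<Longrightarrow> x \<otimes>\<^bsub>S\<^esub> a \<in> I"
    using assms unfolding left_ideal_def by simp
qed

lemma left_ideal_one:
  assumes "left_ideal I S" "\<one>\<^bsub>S\<^esub> \<in> I" shows "I = E"
proof
  interpret SR: ring S by (rule S_ring)
  show "I \<subseteq> E" using left_idealD(1)[OF assms(1)] .
  show "E \<subseteq> I"
  proof
    fix x assume x: "x \<in> E"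
    have "x \<otimes>\<^bsub>S\<^esub> \<one>\<^bsub>S\<^esub> \<in> I" using left_idealD(5)[OF assms(1) assms(2) x] .
    then show "x \<in> I" using x SR.r_one by simp
  qed
qed

lemma small_in_J:
  assumes sp: "semi_projective R M" and t: "t \<in> E" and sm: "small_in R M (t ` carrier M)"
  shows "t \<in> jacobson_radical S"
  unfolding jacobson_radical_def
proof (intro IntI InterI)
  interpret SR: ring S by (rule S_ring)
  show "t \<in> carrier S" using t by simp
  fix I assume "I \<in> {I. maximal_left_ideal I S}"
  then have mI: "maximal_left_ideal I S" by simp
  have LI: "left_ideal I S" and Ine: "I \<noteq> E"
    and Imax: "\<And>J. left_ideal J S \<Longrightarrow> I \<subseteq> J \<Longrightarrow> J = I \<or> J = E"
    using mI unfolding maximal_left_ideal_def by auto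
  note ID = left_idealD[OF LI]
  show "t \<in> I"
  proof (rule ccontr)
    assume tI: "t \<notin> I"
    define I' where "I' = {i \<oplus>\<^bsub>S\<^esub> u \<otimes>\<^bsub>S\<^esub> t | i u. i \<in> I \<and> u \<in> E}"
    have LI': "left_ideal I' S"
    proof (rule left_idealI)
      show "I' \<subseteq> E" using ID(1) t by (auto simp: I'_def intro!: S_add_closed S_mult_closed)
      have "\<zero>\<^bsub>S\<^esub> = \<zero>\<^bsub>S\<^esub> \<oplus>\<^bsub>S\<^esub> \<zero>\<^bsub>S\<^esub> \<otimes>\<^bsub>S\<^esub> t" using t by simp
      then show "\<zero>\<^bsub>S\<^esub> \<in> I'" unfolding I'_def using ID(2) S_zero_closed by blast
      fix a assume "a \<in> I'"
      then obtain i u where iu: "i \<in> I" "u \<in> E" "a = i \<oplus>\<^bsub>S\<^esub> u \<otimes>\<^bsub>S\<^esub> t" by (auto simp: I'_def)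
      have i: "i \<in> E" using iu ID(1) by auto
      have "\<ominus>\<^bsub>S\<^esub> a = (\<ominus>\<^bsub>S\<^esub> i) \<oplus>\<^bsub>S\<^esub> (\<ominus>\<^bsub>S\<^esub> u) \<otimes>\<^bsub>S\<^esub> t"
        using iu i t by (simp add: SR.minus_add SR.l_minus)
      then show "\<ominus>\<^bsub>S\<^esub> a \<in> I'" unfolding I'_def using ID(3)[OF iu(1)] iu(2) SR.a_inv_closed
        by (metis (mono_tags, lifting) S_carrier mem_Collect_eq)
      show "x \<otimes>\<^bsub>S\<^esub> a \<in> I'" if x: "x \<in> E" for x
      proof -
        have "x \<otimes>\<^bsub>S\<^esub> a = x \<otimes>\<^bsub>S\<^esub> i \<oplus>\<^bsub>S\<^esub> (x \<otimes>\<^bsub>S\<^esub> u) \<otimes>\<^bsub>S\<^esub> t"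
          using iu i t x by (simp add: SR.r_distr SR.m_assoc)
        then show ?thesis unfolding I'_def using ID(5)[OF iu(1) x] iu(2) x S_mult_closed by blast
      qed
      fix b assume "b \<in> I'"
      then obtain j v where jv: "j \<in> I" "v \<in> E" "b = j \<oplus>\<^bsub>S\<^esub> v \<otimes>\<^bsub>S\<^esub> t" by (auto simp: I'_def)
      have j: "j \<in> E" using jv ID(1) by auto
      have "a \<oplus>\<^bsub>S\<^esub> b = (i \<oplus>\<^bsub>S\<^esub> j) \<oplus>\<^bsub>S\<^esub> (u \<oplus>\<^bsub>S\<^esub> v) \<otimes>\<^bsub>S\<^esub> t"
        using iu jv i j t by (simp add: SR.l_distr SR.a_ac)
      then show "a \<oplus>\<^bsub>S\<^esub> b \<in> I'" unfolding I'_def using ID(4)[OF iu(1) jv(1)] iu(2) jv(2) S_add_closed by blast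
    qed
    have "I \<subseteq> I'"
    proof
      fix i assume i: "i \<in> I"
      then have "i = i \<oplus>\<^bsub>S\<^esub> \<zero>\<^bsub>S\<^esub> \<otimes>\<^bsub>S\<^esub> t" using ID(1) t by auto
      then show "i \<in> I'" unfolding I'_def using i S_zero_closed by blast
    qed
    moreover have "t \<in> I'"
    proof -
      have "t = \<zero>\<^bsub>S\<^esub> \<oplus>\<^bsub>S\<^esub> \<one>\<^bsub>S\<^esub> \<otimes>\<^bsub>S\<^esub> t" using t by simp
      then show ?thesis unfolding I'_def using ID(2) S_one_closed by blast
    qed
    ultimately have "I' = E" using Imax[OF LI'] tI by blast
    then have "\<one>\<^bsub>S\<^esub> \<in> I'" using S_one_closed by simp
    then obtain i u where iu: "i \<in> I" "u \<in> E" "\<one>\<^bsub>S\<^esub> = i \<oplus>\<^bsub>S\<^esub> u \<otimes>\<^bsub>S\<^esub> t" by (auto simp: I'_def)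
    have i: "i \<in> E" using iu ID(1) by auto
    have pt: "x = i x \<oplus> t (u x)" if "x \<in> carrier M" for x
    proof -
      have "\<one>\<^bsub>S\<^esub> x = (i \<oplus>\<^bsub>S\<^esub> u \<otimes>\<^bsub>S\<^esub> t) x" using iu(3) by simp
      then show ?thesis using that by simp
    qed
    have Imi: "i ` carrier M = carrier M"
    proof (rule ccontr)
      assume ne: "i ` carrier M \<noteq> carrier M"
      have "sum_sub M (t ` carrier M) (i ` carrier M) = carrier M"
      proof
        show "sum_sub M (t ` carrier M) (i ` carrier M) \<subseteq> carrier M"
          using EndD(1)[OF t] EndD(1)[OF i] by (intro sum_sub_subset) auto
        show "carrier M \<subseteq> sum_sub M (t ` carrier M) (i ` carrier M)"
        proof
          fix x assume x: "x \<in> carrier M"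
          have ux: "u x \<in> carrier M" using EndD(1)[OF iu(2) x] .
          have "x = t (u x) \<oplus> i x" using pt[OF x] EndD(1)[OF t ux] EndD(1)[OF i x] M.a_comm by metis
          then show "x \<in> sum_sub M (t ` carrier M) (i ` carrier M)"
            unfolding sum_sub_def using x ux by blast
        qed
      qed
      then show False using sm ne Im_submodule[OF i] unfolding small_in_def by blast
    qed
    have "\<one>\<^bsub>S\<^esub> \<in> Hom_into R M (i ` carrier M)"
      unfolding Hom_into_def Imi using S_one_closed by (auto simp: S_one)
    then have "\<one>\<^bsub>S\<^esub> \<in> {s \<otimes>\<^bsub>S\<^esub> i | s. s \<in> E}" using sp i unfolding semi_projective_def by blast
    then obtain v where v: "v \<in> E" "\<one>\<^bsub>S\<^esub> = v \<otimes>\<^bsub>S\<^esub> i" by blast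
    then have "\<one>\<^bsub>S\<^esub> \<in> I" using ID(5)[OF iu(1) v(1)] by simp
    then have "I = E" using left_ideal_one[OF LI] by simp
    then show False using Ine by simp
  qed
qed


lemma max_exists:
  assumes P: "left_ideal P S" and one: "\<one>\<^bsub>S\<^esub> \<notin> P"
  shows "\<exists>Q. maximal_left_ideal Q S \<and> P \<subseteq> Q"
proof -
  let ?A = "{L. left_ideal L S \<and> P \<subseteq> L \<and> \<one>\<^bsub>S\<^esub> \<notin> L}"
  have "\<exists>Q\<in>?A. \<forall>X\<in>?A. Q \<subseteq> X \<longrightarrow> X = Q"
  proof (rule subset_Zorn_nonempty)
    show "?A \<noteq> {}" using P one by blast
    fix C assume Cne: "C \<noteq> {}" and ch: "subset.chain ?A C"
    have CA: "C \<subseteq> ?A" using ch unfolding subset_chain_def by blast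
    have comp: "\<And>X Y. X \<in> C \<Longrightarrow> Y \<in> C \<Longrightarrow> X \<subseteq> Y \<or> Y \<subseteq> X"
      using ch unfolding subset_chain_def by blast
    obtain X0 where X0: "X0 \<in> C" using Cne by blast
    have LC: "\<And>X. X \<in> C \<Longrightarrow> left_ideal X S" using CA by blast
    have "left_ideal (\<Union>C) S"
    proof (rule left_idealI)
      show "\<Union>C \<subseteq> E"
      proof
        fix a assume "a \<in> \<Union>C"
        then obtain X where "X \<in> C" "a \<in> X" by blast
        then show "a \<in> E" using left_idealD(1)[OF LC[OF \<open>X \<in> C\<close>]] by blast
      qed
      show "\<zero>\<^bsub>S\<^esub> \<in> \<Union>C" using left_idealD(2)[OF LC[OF X0]] X0 by blast
      show "\<ominus>\<^bsub>S\<^esub> a \<in> \<Union>C" if "a \<in> \<Union>C" for a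
      proof -
        obtain X where X: "X \<in> C" "a \<in> X" using \<open>a \<in> \<Union>C\<close> by blast
        then show ?thesis using left_idealD(3)[OF LC[OF X(1)] X(2)] by blast
      qed
      show "x \<otimes>\<^bsub>S\<^esub> a \<in> \<Union>C" if "a \<in> \<Union>C" "x \<in> E" for a x
      proof -
        obtain X where X: "X \<in> C" "a \<in> X" using \<open>a \<in> \<Union>C\<close> by blast
        then show ?thesis using left_idealD(5)[OF LC[OF X(1)] X(2) \<open>x \<in> E\<close>] by blast
      qed
      show "a \<oplus>\<^bsub>S\<^esub> b \<in> \<Union>C" if ab: "a \<in> \<Union>C" "b \<in> \<Union>C" for a b
      proof -
        obtain X Y where XY: "X \<in> C" "Y \<in> C" "a \<in> X" "b \<in> Y" using ab by blast
        show ?thesis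
        proof (cases "X \<subseteq> Y")
          case True
          then have "a \<in> Y" using XY by blast
          then show ?thesis using XY left_idealD(4)[OF LC[OF XY(2)] _ XY(4)] by blast
        next
          case False
          then have "Y \<subseteq> X" using comp XY by blast
          then have "b \<in> X" using XY by blast
          then show ?thesis using XY left_idealD(4)[OF LC[OF XY(1)] XY(3)] by blast
        qed
      qed
    qed
    moreover have "P \<subseteq> \<Union>C" using X0 CA by blast
    moreover have "\<one>\<^bsub>S\<^esub> \<notin> \<Union>C" using CA by blast
    ultimately show "\<Union>C \<in> ?A" by blast
  qed
  then obtain Q where QA: "Q \<in> ?A" and Qm: "\<forall>X\<in>?A. Q \<subseteq> X \<longrightarrow> X = Q" by (rule bexE)
  have "maximal_left_ideal Q S"
    unfolding maximal_left_ideal_def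
  proof (intro conjI allI impI)
    show "left_ideal Q S" using QA by blast
    show "Q \<noteq> carrier S" using QA S_one_closed S_carrier by blast
    fix J assume J: "left_ideal J S \<and> Q \<subseteq> J"
    show "J = Q \<or> J = carrier S"
    proof (cases "\<one>\<^bsub>S\<^esub> \<in> J")
      case True
      then have "J = E" using left_ideal_one J by blast
      then show ?thesis by simp
    next
      case False
      then have "J \<in> ?A" using J QA by blast
      then have "J = Q" using Qm J by blast
      then show ?thesis by simp
    qed
  qed
  then show ?thesis using QA by blast
qed

lemma J_small:
  assumes sp: "semi_projective R M" and pp: "pi_projective R M"
    and tJ: "t \<in> jacobson_radical S"
  shows "small_in R M (t ` carrier M)"
proof -
  interpret SR: ring S by (rule S_ring)
  have t: "t \<in> E" using tJ by (simp add: jacobson_radical_def)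
  have tQ: "\<And>Q. maximal_left_ideal Q S \<Longrightarrow> t \<in> Q" using tJ by (simp add: jacobson_radical_def)
  show ?thesis
    unfolding small_in_def
  proof (intro conjI allI impI notI)
    show "submodule (t ` carrier M) R M" using Im_submodule[OF t] .
    fix L assume L: "submodule L R M \<and> L \<noteq> carrier M"
      and eq: "sum_sub M (t ` carrier M) L = carrier M"
    have "\<one>\<^bsub>S\<^esub> \<in> {g \<oplus>\<^bsub>S\<^esub> h | g h. g \<in> Hom_into R M (t ` carrier M) \<and> h \<in> Hom_into R M L}"
      using pp L eq Im_submodule[OF t] S_one_closed unfolding pi_projective_def by blast
    then obtain g h where gh: "g \<in> Hom_into R M (t ` carrier M)" "h \<in> Hom_into R M L"
      "\<one>\<^bsub>S\<^esub> = g \<oplus>\<^bsub>S\<^esub> h" by blast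
    have h: "h \<in> E" and hL: "h ` carrier M \<subseteq> L" using gh(2) by (auto simp: Hom_into_def)
    have "g \<in> {s \<otimes>\<^bsub>S\<^esub> t | s. s \<in> E}" using sp t gh(1) unfolding semi_projective_def by blast
    then obtain u where u: "u \<in> E" "g = u \<otimes>\<^bsub>S\<^esub> t" by blast
    define P where "P = {v \<otimes>\<^bsub>S\<^esub> h | v. v \<in> E}"
    have LP: "left_ideal P S"
    proof (rule left_idealI)
      show "P \<subseteq> E" using h by (auto simp: P_def)
      have "\<zero>\<^bsub>S\<^esub> = \<zero>\<^bsub>S\<^esub> \<otimes>\<^bsub>S\<^esub> h" using h by simp
      then show "\<zero>\<^bsub>S\<^esub> \<in> P" unfolding P_def using S_zero_closed by blast
      fix a assume "a \<in> P"
      then obtain v where v: "v \<in> E" "a = v \<otimes>\<^bsub>S\<^esub> h" by (auto simp: P_def)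
      have "\<ominus>\<^bsub>S\<^esub> a = (\<ominus>\<^bsub>S\<^esub> v) \<otimes>\<^bsub>S\<^esub> h" using v h by (simp add: SR.l_minus)
      then show "\<ominus>\<^bsub>S\<^esub> a \<in> P" unfolding P_def using v S_neg_closed by blast
      show "x \<otimes>\<^bsub>S\<^esub> a \<in> P" if x: "x \<in> E" for x
      proof -
        have "x \<otimes>\<^bsub>S\<^esub> a = (x \<otimes>\<^bsub>S\<^esub> v) \<otimes>\<^bsub>S\<^esub> h" using v h x by (simp add: SR.m_assoc)
        then show ?thesis unfolding P_def using v x S_mult_closed by blast
      qed
      fix b assume "b \<in> P"
      then obtain w where w: "w \<in> E" "b = w \<otimes>\<^bsub>S\<^esub> h" by (auto simp: P_def)
      have "a \<oplus>\<^bsub>S\<^esub> b = (v \<oplus>\<^bsub>S\<^esub> w) \<otimes>\<^bsub>S\<^esub> h" using v w h by (simp add: SR.l_distr)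
      then show "a \<oplus>\<^bsub>S\<^esub> b \<in> P" unfolding P_def using v w S_add_closed by blast
    qed
    have oneP: "\<one>\<^bsub>S\<^esub> \<notin> P"
    proof
      assume "\<one>\<^bsub>S\<^esub> \<in> P"
      then obtain v where v: "v \<in> E" "\<one>\<^bsub>S\<^esub> = v \<otimes>\<^bsub>S\<^esub> h" by (auto simp: P_def)
      have "carrier M \<subseteq> L"
      proof
        fix x assume x: "x \<in> carrier M"
        have "\<one>\<^bsub>S\<^esub> x = (v \<otimes>\<^bsub>S\<^esub> h) x" using v(2) by simp
        then have "x = h (v x)" using x by simp
        then show "x \<in> L" using hL EndD(1)[OF v(1) x] by blast
      qed
      then show False using L submoduleD(1)[of L] by blast
    qed
    obtain Q where Q: "maximal_left_ideal Q S" "P \<subseteq> Q" using max_exists[OF LP oneP] by blast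
    have LQ: "left_ideal Q S" and QE: "Q \<noteq> E" using Q(1) unfolding maximal_left_ideal_def by auto
    have "g \<in> Q" using u left_idealD(5)[OF LQ tQ[OF Q(1)] u(1)] by simp
    moreover have "h \<in> Q"
    proof -
      have "\<one>\<^bsub>S\<^esub> \<otimes>\<^bsub>S\<^esub> h \<in> P" unfolding P_def using S_one_closed by blast
      then show ?thesis using Q(2) h by auto
    qed
    ultimately have "\<one>\<^bsub>S\<^esub> \<in> Q" using gh(3) left_idealD(4)[OF LQ] by simp
    then show False using left_ideal_one[OF LQ] QE by blast
  qed
qed

lemma J_char:
  assumes sp: "semi_projective R M" and pp: "pi_projective R M"
  shows "t \<in> jacobson_radical S \<longleftrightarrow> t \<in> E \<and> small_in R M (t ` carrier M)"
  using J_small[OF sp pp] small_in_J[OF sp] by (auto simp: jacobson_radical_def)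

lemma J_ideal:
  assumes sp: "semi_projective R M" and pp: "pi_projective R M"
  shows "ideal (jacobson_radical S) S"
proof -
  let ?J = "jacobson_radical S"
  have LJ: "left_ideal ?J S"
  proof (rule left_idealI)
    show "?J \<subseteq> E" by (auto simp: jacobson_radical_def)
    show "\<zero>\<^bsub>S\<^esub> \<in> ?J" by (auto simp: jacobson_radical_def maximal_left_ideal_def dest: left_idealD(2))
    show "\<ominus>\<^bsub>S\<^esub> a \<in> ?J" if "a \<in> ?J" for a
      using that by (auto simp: jacobson_radical_def maximal_left_ideal_def dest: left_idealD(3))
    show "a \<oplus>\<^bsub>S\<^esub> b \<in> ?J" if "a \<in> ?J" "b \<in> ?J" for a b
      using that by (auto simp: jacobson_radical_def maximal_left_ideal_def dest: left_idealD(4))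
    show "x \<otimes>\<^bsub>S\<^esub> a \<in> ?J" if "a \<in> ?J" "x \<in> E" for a x
      using that by (auto simp: jacobson_radical_def maximal_left_ideal_def dest: left_idealD(5))
  qed
  show ?thesis
  proof (rule idealI[OF S_ring])
    show "subgroup ?J (add_monoid S)" using LJ unfolding left_ideal_def additive_subgroup_def by blast
    show "x \<otimes>\<^bsub>S\<^esub> a \<in> ?J" if "a \<in> ?J" "x \<in> carrier S" for a x
      using that left_idealD(5)[OF LJ] by simp
    show "a \<otimes>\<^bsub>S\<^esub> x \<in> ?J" if a: "a \<in> ?J" and x: "x \<in> carrier S" for a x
    proof -
      have aE: "a \<in> E" and sm: "small_in R M (a ` carrier M)" using a J_char[OF sp pp] by auto
      have "(a \<otimes>\<^bsub>S\<^esub> x) ` carrier M = x ` (a ` carrier M)" by (auto simp: image_image)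
      then have "small_in R M ((a \<otimes>\<^bsub>S\<^esub> x) ` carrier M)" using small_img[OF sm] x by simp
      then show ?thesis using J_char[OF sp pp] aE x by simp
    qed
  qed
qed

end


context left_module begin

lemma grp_solve1: "x \<in> carrier M \<Longrightarrow> y \<in> carrier M \<Longrightarrow> z \<in> carrier M \<Longrightarrow> x \<oplus> y = z \<Longrightarrow> y = z \<ominus> x"
  by (metis M.a_comm M.a_inv_closed M.r_neg M.r_zero M.a_assoc M.minus_eq)

lemma grp_solve2: "x \<in> carrier M \<Longrightarrow> y \<in> carrier M \<Longrightarrow> z \<in> carrier M \<Longrightarrow> x = y \<ominus> z \<Longrightarrow> y = x \<oplus> z"
  by (metis M.a_comm M.a_inv_closed M.l_neg M.r_zero M.a_assoc M.minus_eq)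

lemma grp_solve3: "a \<in> carrier M \<Longrightarrow> p \<in> carrier M \<Longrightarrow> p \<oplus> (a \<oplus> \<ominus> p) = a"
  by (metis M.a_comm M.r_neg2 M.a_inv_closed)

lemma submodule_Int: "submodule N R M \<Longrightarrow> submodule L R M \<Longrightarrow> submodule (N \<inter> L) R M"
  by (rule submoduleI') (auto dest: submoduleD)

lemma quot_carrier: "A \<in> carrier (S Quot J) \<longleftrightarrow> (\<exists>a\<in>E. A = J +>\<^bsub>S\<^esub> a)"
  by (simp add: FactRing_def A_RCOSETS_def')

lemma quot_mult:
  assumes "ideal J S" "a \<in> E" "b \<in> E"
  shows "(J +>\<^bsub>S\<^esub> a) \<otimes>\<^bsub>S Quot J\<^esub> (J +>\<^bsub>S\<^esub> b) = J +>\<^bsub>S\<^esub> (a \<otimes>\<^bsub>S\<^esub> b)"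
  using ideal.rcoset_mult_add[OF assms(1), of a b] assms by (simp add: FactRing_def)


lemma dir1:
  assumes sp: "semi_projective R M" and pp: "pi_projective R M"
    and ws: "\<forall>f\<in>E. \<exists>L. weak_supplement R M L (f ` carrier M)"
  shows "von_neumann_regular (S Quot jacobson_radical S)"
  unfolding von_neumann_regular_def
proof
  interpret SR: ring S by (rule S_ring)
  let ?J = "jacobson_radical S"
  have JI: "ideal ?J S" by (rule J_ideal[OF sp pp])
  interpret JI: ideal ?J S by (rule JI)
  fix A assume "A \<in> carrier (S Quot ?J)"
  then obtain f where f: "f \<in> E" "A = ?J +>\<^bsub>S\<^esub> f" using quot_carrier by blast
  obtain L where L: "weak_supplement R M L (f ` carrier M)" using ws f by blast
  have Lsub: "submodule L R M" and Lsum: "sum_sub M (f ` carrier M) L = carrier M"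
    and Lsm: "small_in R M (f ` carrier M \<inter> L)" using L unfolding weak_supplement_def by auto
  have Imf: "submodule (f ` carrier M) R M" by (rule Im_submodule[OF f(1)])
  have "\<one>\<^bsub>S\<^esub> \<in> {g \<oplus>\<^bsub>S\<^esub> h | g h. g \<in> Hom_into R M (f ` carrier M) \<and> h \<in> Hom_into R M L}"
    using pp Lsub Lsum Imf S_one_closed unfolding pi_projective_def by blast
  then obtain g h where gh: "g \<in> Hom_into R M (f ` carrier M)" "h \<in> Hom_into R M L"
    "\<one>\<^bsub>S\<^esub> = g \<oplus>\<^bsub>S\<^esub> h" by blast
  have h: "h \<in> E" and hL: "h ` carrier M \<subseteq> L" using gh(2) by (auto simp: Hom_into_def)
  have g: "g \<in> E" and gf: "g ` carrier M \<subseteq> f ` carrier M" using gh(1) by (auto simp: Hom_into_def)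
  have "g \<in> {s \<otimes>\<^bsub>S\<^esub> f | s. s \<in> E}" using sp f gh(1) unfolding semi_projective_def by blast
  then obtain s where s: "s \<in> E" "g = s \<otimes>\<^bsub>S\<^esub> f" by blast
  have pt: "y = g y \<oplus> h y" if "y \<in> carrier M" for y
  proof -
    have "\<one>\<^bsub>S\<^esub> y = (g \<oplus>\<^bsub>S\<^esub> h) y" using gh(3) by simp
    then show ?thesis using that by simp
  qed
  have dJ: "f \<otimes>\<^bsub>S\<^esub> h \<in> ?J"
  proof -
    have "(f \<otimes>\<^bsub>S\<^esub> h) ` carrier M \<subseteq> f ` carrier M \<inter> L"
    proof
      fix z assume "z \<in> (f \<otimes>\<^bsub>S\<^esub> h) ` carrier M"
      then obtain x where x: "x \<in> carrier M" "z = h (f x)" by auto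
      have fx: "f x \<in> carrier M" using EndD(1)[OF f(1) x(1)] .
      have "z \<in> L" using x hL fx by blast
      moreover have "z \<in> f ` carrier M"
      proof -
        have "h (f x) = f x \<ominus> g (f x)"
          using grp_solve1[OF EndD(1)[OF g fx] EndD(1)[OF h fx] fx] pt[OF fx] by simp
        moreover have "g (f x) \<in> f ` carrier M" using gf fx by blast
        moreover have "f x \<in> f ` carrier M" using x by blast
        ultimately show ?thesis using x(2) submoduleD(3,4)[OF Imf] by (simp add: M.minus_eq)
      qed
      ultimately show "z \<in> f ` carrier M \<inter> L" by blast
    qed
    moreover have "f \<otimes>\<^bsub>S\<^esub> h \<in> E" using f h by simp
    ultimately have "small_in R M ((f \<otimes>\<^bsub>S\<^esub> h) ` carrier M)"
      using small_mono[OF Lsm Im_submodule] by blast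
    then show ?thesis using J_char[OF sp pp] f h by simp
  qed
  have eq: "f = f \<otimes>\<^bsub>S\<^esub> h \<oplus>\<^bsub>S\<^esub> f \<otimes>\<^bsub>S\<^esub> s \<otimes>\<^bsub>S\<^esub> f"
  proof -
    have "f \<otimes>\<^bsub>S\<^esub> s \<otimes>\<^bsub>S\<^esub> f = f \<otimes>\<^bsub>S\<^esub> g" using s f by (simp add: SR.m_assoc)
    then have "f \<otimes>\<^bsub>S\<^esub> h \<oplus>\<^bsub>S\<^esub> f \<otimes>\<^bsub>S\<^esub> s \<otimes>\<^bsub>S\<^esub> f = f \<otimes>\<^bsub>S\<^esub> (h \<oplus>\<^bsub>S\<^esub> g)"
      using f g h by (simp add: SR.r_distr)
    also have "\<dots> = f \<otimes>\<^bsub>S\<^esub> \<one>\<^bsub>S\<^esub>" using gh(3) g h by (simp add: SR.a_comm)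
    also have "\<dots> = f" using f by simp
    finally show ?thesis by simp
  qed
  have fsf: "f \<otimes>\<^bsub>S\<^esub> s \<otimes>\<^bsub>S\<^esub> f \<in> E" using f s by simp
  have "f \<in> ?J +>\<^bsub>S\<^esub> (f \<otimes>\<^bsub>S\<^esub> s \<otimes>\<^bsub>S\<^esub> f)"
    unfolding a_r_coset_def' using dJ eq by blast
  then have cos: "?J +>\<^bsub>S\<^esub> (f \<otimes>\<^bsub>S\<^esub> s \<otimes>\<^bsub>S\<^esub> f) = ?J +>\<^bsub>S\<^esub> f"
    using JI.a_repr_independence' fsf by simp
  show "\<exists>B\<in>carrier (S Quot ?J). A \<otimes>\<^bsub>S Quot ?J\<^esub> B \<otimes>\<^bsub>S Quot ?J\<^esub> A = A"
  proof (intro bexI)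
    show "?J +>\<^bsub>S\<^esub> s \<in> carrier (S Quot ?J)" using quot_carrier s by blast
    show "A \<otimes>\<^bsub>S Quot ?J\<^esub> (?J +>\<^bsub>S\<^esub> s) \<otimes>\<^bsub>S Quot ?J\<^esub> A = A"
      using f s cos by (simp add: quot_mult[OF JI])
  qed
qed


lemma dir2:
  assumes sp: "semi_projective R M" and pp: "pi_projective R M"
    and vr: "von_neumann_regular (S Quot jacobson_radical S)"
    and f: "f \<in> E"
  shows "\<exists>L. weak_supplement R M L (f ` carrier M)"
proof -
  interpret SR: ring S by (rule S_ring)
  let ?J = "jacobson_radical S"
  have JI: "ideal ?J S" by (rule J_ideal[OF sp pp])
  interpret JI: ideal ?J S by (rule JI)
  have "?J +>\<^bsub>S\<^esub> f \<in> carrier (S Quot ?J)" using quot_carrier f by blast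
  then obtain B where B: "B \<in> carrier (S Quot ?J)"
    "(?J +>\<^bsub>S\<^esub> f) \<otimes>\<^bsub>S Quot ?J\<^esub> B \<otimes>\<^bsub>S Quot ?J\<^esub> (?J +>\<^bsub>S\<^esub> f) = ?J +>\<^bsub>S\<^esub> f"
    using vr unfolding von_neumann_regular_def by blast
  then obtain g where g: "g \<in> E" and gB: "B = ?J +>\<^bsub>S\<^esub> g" using quot_carrier by blast
  have "?J +>\<^bsub>S\<^esub> (f \<otimes>\<^bsub>S\<^esub> g \<otimes>\<^bsub>S\<^esub> f) = ?J +>\<^bsub>S\<^esub> f"
    using B(2) gB g f by (simp add: quot_mult[OF JI])
  moreover have "f \<otimes>\<^bsub>S\<^esub> g \<otimes>\<^bsub>S\<^esub> f \<in> ?J +>\<^bsub>S\<^esub> (f \<otimes>\<^bsub>S\<^esub> g \<otimes>\<^bsub>S\<^esub> f)"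
    using JI.a_rcos_self f g by simp
  ultimately have "f \<otimes>\<^bsub>S\<^esub> g \<otimes>\<^bsub>S\<^esub> f \<in> ?J +>\<^bsub>S\<^esub> f" by simp
  then have dJ: "f \<otimes>\<^bsub>S\<^esub> g \<otimes>\<^bsub>S\<^esub> f \<oplus>\<^bsub>S\<^esub> \<ominus>\<^bsub>S\<^esub> f \<in> ?J"
    using JI.a_rcos_module_imp f by simp
  define d where "d = f \<otimes>\<^bsub>S\<^esub> g \<otimes>\<^bsub>S\<^esub> f \<oplus>\<^bsub>S\<^esub> \<ominus>\<^bsub>S\<^esub> f"
  have d: "d \<in> E" using f g by (simp add: d_def)
  have dsm: "small_in R M (d ` carrier M)" using dJ J_char[OF sp pp] by (simp add: d_def)
  have dapp: "d x = f (g (f x)) \<ominus> f x" if "x \<in> carrier M" for x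
    using that f g EndD(1)[OF f] EndD(1)[OF g] by (simp add: d_def M.minus_eq)
  define w where "w = \<one>\<^bsub>S\<^esub> \<oplus>\<^bsub>S\<^esub> \<ominus>\<^bsub>S\<^esub> (g \<otimes>\<^bsub>S\<^esub> f)"
  have w: "w \<in> E" using f g by (simp add: w_def)
  have wapp: "w x = x \<ominus> f (g x)" if "x \<in> carrier M" for x
    using that f g EndD(1)[OF f] EndD(1)[OF g] by (simp add: w_def M.minus_eq)
  have fc: "\<And>x. x \<in> carrier M \<Longrightarrow> f x \<in> carrier M" using EndD(1)[OF f] .
  have gc: "\<And>x. x \<in> carrier M \<Longrightarrow> g x \<in> carrier M" using EndD(1)[OF g] .
  have dc: "\<And>x. x \<in> carrier M \<Longrightarrow> d x \<in> carrier M" using EndD(1)[OF d] .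
  let ?L = "w ` carrier M"
  have Lsub: "submodule ?L R M" by (rule Im_submodule[OF w])
  have Imf: "submodule (f ` carrier M) R M" by (rule Im_submodule[OF f])
  have "sum_sub M (f ` carrier M) ?L = carrier M"
  proof
    show "sum_sub M (f ` carrier M) ?L \<subseteq> carrier M"
      using fc EndD(1)[OF w] by (intro sum_sub_subset) auto
    show "carrier M \<subseteq> sum_sub M (f ` carrier M) ?L"
    proof
      fix x assume x: "x \<in> carrier M"
      have "x = w x \<oplus> f (g x)" using grp_solve2[OF EndD(1)[OF w x] x fc[OF gc[OF x]] wapp[OF x]] .
      then have "x = f (g x) \<oplus> w x" using EndD(1)[OF w x] fc[OF gc[OF x]] by (simp add: M.a_comm)
      then show "x \<in> sum_sub M (f ` carrier M) ?L" unfolding sum_sub_def using x gc[OF x] by blast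
    qed
  qed
  moreover have "small_in R M (f ` carrier M \<inter> ?L)"
  proof (rule small_mono[OF dsm submodule_Int[OF Imf Lsub]])
    show "f ` carrier M \<inter> ?L \<subseteq> d ` carrier M"
    proof
      fix y assume "y \<in> f ` carrier M \<inter> ?L"
      then obtain x z where x: "x \<in> carrier M" "y = f x" and z: "z \<in> carrier M" "y = w z" by blast
      define p where "p = f (g z)"
      have p: "p \<in> carrier M" using fc gc z by (simp add: p_def)
      have y: "y \<in> carrier M" using fc x by simp
      have y2: "y = z \<ominus> p" using z wapp by (simp add: p_def)
      have e1: "f (g y) = d x \<oplus> y"
        using grp_solve2[OF dc[OF x(1)] fc[OF gc[OF fc[OF x(1)]]] fc[OF x(1)] dapp[OF x(1)]] by (simp add: x(2))
      have e2: "f (g p) = d (g z) \<oplus> p"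
        using grp_solve2[OF dc[OF gc[OF z(1)]] fc[OF gc[OF p]] p dapp[OF gc[OF z(1)], folded p_def]] by (simp add: p_def)
      have "f (g y) = p \<ominus> f (g p)"
        using y2 z p by (simp add: End_minus[OF g] End_minus[OF f] gc p_def)
      also have "\<dots> = \<ominus> d (g z)"
        using e2 p dc gc z by (simp add: M.minus_eq M.minus_add grp_solve3)
      finally have "d x \<oplus> y = \<ominus> d (g z)" using e1 by simp
      then have "y = \<ominus> d (g z) \<ominus> d x" using grp_solve1 dc gc x z y by simp
      also have "\<dots> = d (\<ominus> g z \<ominus> x)"
        using End_minus[OF d] End_neg[OF d] gc x z by simp
      finally show "y \<in> d ` carrier M" using gc z x by (simp add: M.minus_eq)
    qed
  qed
  ultimately have "weak_supplement R M ?L (f ` carrier M)"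
    unfolding weak_supplement_def using Lsub by blast
  then show ?thesis by blast
qed

end

theorem mainTheorem3:
  fixes R :: "('a, 'c) ring_scheme" and M :: "('a, 'b, 'd) module_scheme"
  assumes "left_module R M"
    and "semi_projective R M"
    and "pi_projective R M"
  shows "von_neumann_regular (End_ring R M Quot jacobson_radical (End_ring R M))
     \<longleftrightarrow> (\<forall>f\<in>End_carrier R M. \<exists>L. weak_supplement R M L (f ` carrier M))"
proof -
  interpret left_module R M by fact
  show ?thesis using dir1[OF assms(2,3)] dir2[OF assms(2,3)] by blast
qed



end
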